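(* There exists a partition of $\mathbb R$ into two sets $A,B$ such that each of $A$ and $B$ is a Bernstein set and neither $A$ nor $B$ is a $2$-covering.
   Context: A set $B\subseteq\mathbb R$ is a Bernstein set if for every uncountable Borel set $Z\subseteq\mathbb R$ both $Z\cap B$ and $Z\setminus B$ are nonempty. For a cardinal $\kappa$, a set $A\subseteq\mathbb R$ is a $\kappa$-covering if for every $B\subseteq\mathbb R$ with $|B|=\kappa$ there is $x\in\mathbb R$ with $B+x\subseteq A$. *)

theory Defs
  imports "HOL-Analysis.Analysis"
begin

definition bernstein_set :: "real set \<Rightarrow> bool" where
  "bernstein_set B \<longleftrightarrow>
     (\<forall>Z \<in> sets borel. uncountable Z \<longrightarrow> Z \<inter> B \<noteq> {} \<and> Z - B \<noteq> {})"

definition n_covering :: "nat \<Rightarrow> real set \<Rightarrow> bool" where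
  "n_covering n A \<longleftrightarrow>
     (\<forall>B :: real set. finite B \<and> card B = n \<longrightarrow> (\<exists>x::real. (\<lambda>b. b + x) ` B \<subseteq> A))"

end

theory Submission
  imports Defs
begin
unbundle cardinal_syntax



lemma fin_less_inf: "finite A \<Longrightarrow> \<not> finite B \<Longrightarrow> |A| <o |B|"
  by (meson card_of_Well_order card_of_ordLeq_finite not_ordLeq_iff_ordLess)

lemma two_outside:
  assumes "infinite K" "|U| <o |K|"
  shows "\<exists>a b. a \<in> K \<and> b \<in> K \<and> a \<noteq> b \<and> a \<notin> U \<and> b \<notin> U"
proof -
  have "infinite (K - U)"
  proof
    assume f: "finite (K - U)"
    have "|K - U| <o |K|" using fin_less_inf[OF f assms(1)] .
    hence "|U \<union> (K - U)| <o |K|" using card_of_Un_ordLess_infinite assms by blast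
    moreover have "|K| \<le>o |U \<union> (K - U)|" by (rule card_of_mono1) blast
    ultimately show False using not_ordLess_ordLeq by blast
  qed
  then obtain a where a: "a \<in> K - U" by (metis infinite_imp_nonempty all_not_in_conv)
  have "infinite (K - U - {a})" using \<open>infinite (K - U)\<close> by simp
  then obtain b where "b \<in> K - U - {a}" by (metis infinite_imp_nonempty all_not_in_conv)
  thus ?thesis using a by (intro exI[of _ a] exI[of _ b]) auto
qed

lemma bernstein_generic:
  fixes KK :: "'a set set" and T :: "'b set"
  assumes T: "|KK| \<le>o |T|" and KT: "\<And>K. K \<in> KK \<Longrightarrow> |T| \<le>o |K|" and inf: "infinite T"
  shows "\<exists>S. \<forall>K\<in>KK. K \<inter> S \<noteq> {} \<and> K - S \<noteq> {}"
proof -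
  obtain e where e: "inj_on e KK" "e ` KK \<subseteq> T" using T card_of_ordLeq[of KK T] by auto
  define r where "r = |T|"
  have WO: "Well_order r" unfolding r_def by (rule card_of_Well_order)
  have WR: "wo_rel r" by (simp add: wo_rel_def WO)
  define U where "U f t = (fst \<circ> f) ` (underS r t \<inter> e ` KK) \<union> (snd \<circ> f) ` (underS r t \<inter> e ` KK)"
    for f :: "'b \<Rightarrow> 'a \<times> 'a" and t
  define H where "H f t = (if t \<in> e ` KK then (SOME p. fst p \<in> the_inv_into KK e t \<and> snd p \<in> the_inv_into KK e t
      \<and> fst p \<noteq> snd p \<and> fst p \<notin> U f t \<and> snd p \<notin> U f t) else undefined)" for f t
  have adm: "wo_rel.adm_wo r H"
    unfolding wo_rel.adm_wo_def[OF WR] H_def U_def by (auto simp: image_def)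
  define w where "w = wo_rel.worec r H"
  have wfix: "w t = H w t" for t unfolding w_def using wo_rel.worec_fixpoint[OF WR adm] by metis
  have good: "fst (w t) \<in> the_inv_into KK e t \<and> snd (w t) \<in> the_inv_into KK e t
      \<and> fst (w t) \<noteq> snd (w t) \<and> fst (w t) \<notin> U w t \<and> snd (w t) \<notin> U w t" if t: "t \<in> e ` KK" for t
  proof -
    define K where "K = the_inv_into KK e t"
    have K: "K \<in> KK" unfolding K_def using t e(1) by (simp add: the_inv_into_into)
    have tF: "t \<in> Field r" using t e(2) unfolding r_def Field_card_of by blast
    have u: "|underS r t| <o |T|" using card_of_underS[OF _ tF] unfolding r_def using card_of_Card_order by blast
    define X where "X = underS r t \<inter> e ` KK"
    have uK: "|underS r t| <o |K|" using ordLess_ordLeq_trans[OF u KT[OF K]] .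
    have X: "|X| \<le>o |underS r t|" unfolding X_def by (rule card_of_mono1) blast
    have 1: "|(fst \<circ> w) ` X| <o |K|"
      using ordLeq_ordLess_trans[OF ordLeq_transitive[OF card_of_image X] uK] .
    have 2: "|(snd \<circ> w) ` X| <o |K|"
      using ordLeq_ordLess_trans[OF ordLeq_transitive[OF card_of_image X] uK] .
    have iK: "infinite K" using KT[OF K] inf card_of_ordLeq_finite by blast
    have "|U w t| <o |K|" unfolding U_def X_def[symmetric] using card_of_Un_ordLess_infinite[OF iK 1 2] .
    from two_outside[OF iK this] obtain a b where "a \<in> K \<and> b \<in> K \<and> a \<noteq> b \<and> a \<notin> U w t \<and> b \<notin> U w t" by blast
    hence ex: "\<exists>p. fst p \<in> K \<and> snd p \<in> K \<and> fst p \<noteq> snd p \<and> fst p \<notin> U w t \<and> snd p \<notin> U w t"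
      by (metis fst_conv snd_conv)
    have "w t = (SOME p. fst p \<in> K \<and> snd p \<in> K \<and> fst p \<noteq> snd p \<and> fst p \<notin> U w t \<and> snd p \<notin> U w t)"
      using wfix[of t] t unfolding H_def K_def by simp
    then show ?thesis using someI_ex[OF ex] unfolding K_def by simp
  qed
  define S where "S = (fst \<circ> w) ` (e ` KK)"
  show ?thesis
  proof (intro exI ballI conjI)
    fix K assume K: "K \<in> KK"
    let ?t = "e K"
    have tK: "the_inv_into KK e ?t = K" using K e(1) the_inv_into_f_f by metis
    have g: "fst (w ?t) \<in> K" "snd (w ?t) \<in> K" "fst (w ?t) \<noteq> snd (w ?t)" "snd (w ?t) \<notin> U w ?t"
      using good[of ?t] K tK by auto
    show "K \<inter> S \<noteq> {}" using g(1) K unfolding S_def by auto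
    have "snd (w ?t) \<notin> S"
    proof
      assume "snd (w ?t) \<in> S"
      then obtain K' where K': "K' \<in> KK" "snd (w ?t) = fst (w (e K'))" unfolding S_def by auto
      have F: "e K \<in> Field r" "e K' \<in> Field r" using K K' e(2) unfolding r_def Field_card_of by auto
      consider "e K' = e K" | "e K' \<in> underS r (e K)" | "e K \<in> underS r (e K')"
        using wo_rel.TOTALS[OF WR] F unfolding underS_def mem_Collect_eq by metis
      thus False
      proof cases
        case 1 thus ?thesis using g(3) K' by simp
      next
        case 2 thus ?thesis using g(4) K' unfolding U_def by force
      next
        case 3
        have "fst (w (e K')) \<notin> U w (e K')" using good[of "e K'"] K' by auto
        thus ?thesis using 3 K K' unfolding U_def by force
      qed
    qed
    thus "K - S \<noteq> {}" using g(2) by blast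
  qed
qed



locale pst =
  fixes F :: "'a::polish_space set" and f :: "'a \<Rightarrow> real"
  assumes clo: "closed F" and con: "continuous_on F f" and unc: "uncountable (f ` F)"
begin

definition F' where "F' = {x\<in>F. \<forall>e>0. uncountable (f ` (F \<inter> ball x e))}"

lemma F'_sub: "F' \<subseteq> F" unfolding F'_def by auto

lemma count_rest: "countable (f ` (F - F'))"
proof -
  obtain B :: "'a set set" where B: "countable B" "topological_basis B" using ex_countable_basis by blast
  define B' where "B' = {b\<in>B. countable (f ` (F \<inter> b))}"
  have "f ` (F - F') \<subseteq> (\<Union>b\<in>B'. f ` (F \<inter> b))"
  proof
    fix y assume "y \<in> f ` (F - F')"
    then obtain x where x: "x \<in> F" "x \<notin> F'" "y = f x" by auto
    have "\<exists>e>0. countable (f ` (F \<inter> ball x e))" using x(1,2) unfolding F'_def by blast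
    then obtain e where e: "e > 0" "countable (f ` (F \<inter> ball x e))" by blast
    have "x \<in> ball x e" using e(1) by simp
    then obtain b where b: "b \<in> B" "x \<in> b" "b \<subseteq> ball x e"
      by (rule topological_basisE[OF B(2) open_ball])
    have "f ` (F \<inter> b) \<subseteq> f ` (F \<inter> ball x e)" using b(3) by blast
    hence "countable (f ` (F \<inter> b))" using e(2) by (rule countable_subset)
    hence "b \<in> B'" using b(1) unfolding B'_def by simp
    thus "y \<in> (\<Union>b\<in>B'. f ` (F \<inter> b))" using b(2) x by blast
  qed
  moreover have "countable (\<Union>b\<in>B'. f ` (F \<inter> b))"
  proof (rule countable_UN)
    have "B' \<subseteq> B" unfolding B'_def by blast
    thus "countable B'" using B(1) by (rule countable_subset)
    show "countable (f ` (F \<inter> b))" if "b \<in> B'" for b using that unfolding B'_def by blast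
  qed
  ultimately show ?thesis by (rule countable_subset)
qed

lemma unc_F': assumes "x \<in> F'" "e > 0" shows "uncountable (f ` (F' \<inter> ball x e))"
proof
  assume c: "countable (f ` (F' \<inter> ball x e))"
  have "f ` (F \<inter> ball x e) \<subseteq> f ` (F' \<inter> ball x e) \<union> f ` (F - F')" by blast
  moreover have "countable (f ` (F' \<inter> ball x e) \<union> f ` (F - F'))" using c count_rest by simp
  ultimately have "countable (f ` (F \<inter> ball x e))" by (rule countable_subset)
  thus False using assms unfolding F'_def by auto
qed

lemma F'_ne: "F' \<noteq> {}"
proof
  assume "F' = {}"
  hence "f ` F = f ` (F - F')" by simp
  thus False using unc count_rest by simp
qed

lemma cont_at: assumes "p \<in> F" "\<rho> > 0" "\<eta> > 0"
  shows "\<exists>r. 0 < r \<and> r \<le> \<rho> \<and> (\<forall>x\<in>F. dist x p \<le> r \<longrightarrow> dist (f x) (f p) < \<eta>)"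
proof -
  have "\<forall>e>0. \<exists>d>0. \<forall>x\<in>F. dist x p < d \<longrightarrow> dist (f x) (f p) < e"
    using con assms(1) unfolding continuous_on_iff by blast
  then obtain d where d: "d > 0" "\<forall>x\<in>F. dist x p < d \<longrightarrow> dist (f x) (f p) < \<eta>"
    using assms(3) by blast
  show ?thesis using d assms by (intro exI[of _ "min (d/2) \<rho>"]) auto
qed

definition Inv :: "nat \<Rightarrow> 'a \<times> real \<times> real \<Rightarrow> bool" where
  "Inv n nd \<longleftrightarrow> fst nd \<in> F' \<and> 0 < fst (snd nd) \<and> fst (snd nd) \<le> (1/2)^n \<and>
     0 < snd (snd nd) \<and> snd (snd nd) \<le> (1/2)^n \<and>
     (\<forall>x\<in>F. dist x (fst nd) \<le> fst (snd nd) \<longrightarrow> dist (f x) (f (fst nd)) < snd (snd nd))"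

definition Good :: "nat \<Rightarrow> 'a \<times> real \<times> real \<Rightarrow> (bool \<Rightarrow> 'a \<times> real \<times> real) \<Rightarrow> bool" where
  "Good n nd c \<longleftrightarrow> (\<forall>i. Inv (Suc n) (c i) \<and> cball (fst (c i)) (fst (snd (c i))) \<subseteq> cball (fst nd) (fst (snd nd)))
     \<and> dist (f (fst (c True))) (f (fst (c False))) > snd (snd (c True)) + snd (snd (c False))"

lemma root_ex: "\<exists>nd. Inv 0 nd"
proof -
  obtain p where p: "p \<in> F'" using F'_ne by blast
  obtain r where r: "0 < r \<and> r \<le> 1 \<and> (\<forall>x\<in>F. dist x p \<le> r \<longrightarrow> dist (f x) (f p) < 1)"
    using cont_at[of p 1 1] p F'_sub by auto
  show ?thesis using p r unfolding Inv_def by (intro exI[of _ "(p, r, 1)"]) auto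
qed

lemma step_ex: assumes "Inv n nd" shows "\<exists>c. Good n nd c"
proof -
  obtain p r \<epsilon> where nd: "nd = (p, r, \<epsilon>)" by (cases nd) auto
  have p: "p \<in> F'" and r: "r > 0" using assms unfolding nd Inv_def by auto
  have u: "uncountable (f ` (F' \<inter> ball p r))" using unc_F'[OF p r] .
  then obtain y0 where y0: "y0 \<in> f ` (F' \<inter> ball p r)"
    by (metis countable_empty equals0I)
  have "uncountable (f ` (F' \<inter> ball p r) - {y0})" using u by auto
  then obtain y1 where y1: "y1 \<in> f ` (F' \<inter> ball p r) - {y0}"
    by (metis countable_empty equals0I)
  obtain p0 where p0: "p0 \<in> F'" "dist p p0 < r" "y0 = f p0" using y0 by auto
  obtain p1 where p1: "p1 \<in> F'" "dist p p1 < r" "y1 = f p1" "f p1 \<noteq> f p0" using y1 p0 by auto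
  define d where "d = dist (f p0) (f p1)"
  have d: "d > 0" unfolding d_def using p1 by simp
  define \<eta> where "\<eta> = min (d/3) ((1/2)^Suc n)"
  have eta: "\<eta> > 0" "\<eta> \<le> (1/2)^Suc n" "\<eta> \<le> d/3" unfolding \<eta>_def using d by auto
  have node: "\<exists>r'. Inv (Suc n) (q, r', \<eta>) \<and> cball q r' \<subseteq> cball p r"
    if q: "q \<in> F'" "dist p q < r" for q
  proof -
    have rho: "min ((1/2)^Suc n) ((r - dist p q)/2) > 0" using q by simp
    obtain r' where r': "0 < r'" "r' \<le> min ((1/2)^Suc n) ((r - dist p q)/2)"
       "\<forall>x\<in>F. dist x q \<le> r' \<longrightarrow> dist (f x) (f q) < \<eta>"
      using cont_at[OF _ rho eta(1)] q F'_sub by blast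
    have "cball q r' \<subseteq> cball p r"
    proof
      fix x assume "x \<in> cball q r'"
      hence "dist q x \<le> r'" by simp
      have "dist p x \<le> dist p q + dist q x" by (rule dist_triangle)
      also have "\<dots> \<le> dist p q + (r - dist p q)/2" using r'(2) \<open>dist q x \<le> r'\<close> by simp
      also have "\<dots> \<le> r" using q(2) by (simp add: field_simps)
      finally have "dist p x \<le> r" .
      thus "x \<in> cball p r" by simp
    qed
    thus ?thesis using r' q eta unfolding Inv_def by (intro exI[of _ r']) auto
  qed
  obtain r0 where r0: "Inv (Suc n) (p0, r0, \<eta>)" "cball p0 r0 \<subseteq> cball p r" using node[OF p0(1,2)] by blast
  obtain r1 where r1: "Inv (Suc n) (p1, r1, \<eta>)" "cball p1 r1 \<subseteq> cball p r" using node[OF p1(1,2)] by blast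
  define c where "c = (\<lambda>i. if i then (p0, r0, \<eta>) else (p1, r1, \<eta>))"
  have "Good n nd c" unfolding Good_def c_def nd using r0 r1 eta d unfolding d_def by auto
  thus ?thesis by blast
qed

definition root where "root = (SOME nd. Inv 0 nd)"
definition ch where "ch n nd = (SOME c. Good n nd c)"

primrec seq :: "(nat \<Rightarrow> bool) \<Rightarrow> nat \<Rightarrow> 'a \<times> real \<times> real" where
  "seq b 0 = root"
| "seq b (Suc n) = ch n (seq b n) (b n)"

lemma Inv_seq: "Inv n (seq b n)"
proof (induction n)
  case 0 then show ?case using someI_ex[OF root_ex] by (simp add: root_def)
next
  case (Suc n)
  have "Good n (seq b n) (ch n (seq b n))" unfolding ch_def using someI_ex[OF step_ex[OF Suc]] .
  thus ?case unfolding Good_def by simp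
qed

lemma Good_seq: "Good n (seq b n) (ch n (seq b n))"
  unfolding ch_def using someI_ex[OF step_ex[OF Inv_seq]] .

abbreviation "P b n \<equiv> fst (seq b n)"
abbreviation "R b n \<equiv> fst (snd (seq b n))"
abbreviation "E b n \<equiv> snd (snd (seq b n))"

lemma cball_step: "cball (P b (Suc n)) (R b (Suc n)) \<subseteq> cball (P b n) (R b n)"
  using Good_seq[of n b] unfolding Good_def by simp

lemma cball_mono: "n \<le> m \<Longrightarrow> cball (P b m) (R b m) \<subseteq> cball (P b n) (R b n)"
proof (induction m rule: dec_induct)
  case base then show ?case by simp
next
  case (step m) then show ?case using cball_step[of b m] by blast
qed

lemma P_close: assumes "n \<le> m" shows "dist (P b n) (P b m) \<le> (1/2)^n"
proof -
  have "P b m \<in> cball (P b m) (R b m)" using Inv_seq[of m b] unfolding Inv_def by simp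
  hence "P b m \<in> cball (P b n) (R b n)" using cball_mono[OF assms] by blast
  thus ?thesis using Inv_seq[of n b] unfolding Inv_def by simp
qed

lemma Cauchy_P: "Cauchy (P b)"
proof (rule metric_CauchyI)
  fix e :: real assume e: "e > 0"
  obtain N where N: "(1/2::real)^N < e/2" using real_arch_pow_inv[of "e/2" "1/2"] e by auto
  show "\<exists>M. \<forall>m\<ge>M. \<forall>n\<ge>M. dist (P b m) (P b n) < e"
  proof (intro exI allI impI)
    fix m n assume "m \<ge> N" "n \<ge> N"
    hence "dist (P b N) (P b m) \<le> (1/2)^N" "dist (P b N) (P b n) \<le> (1/2)^N" using P_close by auto
    hence "dist (P b m) (P b n) \<le> 2 * (1/2)^N" using dist_triangle3[of "P b m" "P b n" "P b N"] by simp
    thus "dist (P b m) (P b n) < e" using N by simp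
  qed
qed

definition L where "L b = lim (P b)"

lemma P_lim: "P b \<longlonglongrightarrow> L b"
  unfolding L_def using Cauchy_P[of b] Cauchy_convergent_iff convergent_LIMSEQ_iff by blast

lemma L_in: "L b \<in> cball (P b n) (R b n)"
proof (rule closed_sequentially[of _ "\<lambda>k. P b (k + n)"])
  show "closed (cball (P b n) (R b n))" by simp
  show "P b (k + n) \<in> cball (P b n) (R b n)" for k
    using cball_mono[of n "k+n" b] Inv_seq[of "k+n" b] unfolding Inv_def by force
  show "(\<lambda>k. P b (k + n)) \<longlonglongrightarrow> L b" using LIMSEQ_ignore_initial_segment[OF P_lim] .
qed

lemma L_F: "L b \<in> F"
proof (rule closed_sequentially[OF clo])
  show "P b n \<in> F" for n using Inv_seq[of n b] F'_sub unfolding Inv_def by auto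
  show "P b \<longlonglongrightarrow> L b" by (rule P_lim)
qed

definition J where "J nd = closure (f ` (F \<inter> cball (fst nd) (fst (snd nd))))"

lemma J_sub: "J (seq b n) \<subseteq> cball (f (P b n)) (E b n)"
proof -
  have "f ` (F \<inter> cball (P b n) (R b n)) \<subseteq> cball (f (P b n)) (E b n)"
    using Inv_seq[of n b] unfolding Inv_def by (auto simp: dist_commute less_imp_le)
  thus ?thesis unfolding J_def by (intro closure_minimal) auto
qed

lemma J_mono: "n \<le> m \<Longrightarrow> J (seq b m) \<subseteq> J (seq b n)"
  unfolding J_def using cball_mono[of n m b] by (intro closure_mono) blast

lemma g_J: "f (L b) \<in> J (seq b n)"
  unfolding J_def using L_in[of b n] L_F by (intro closure_subset[THEN subsetD]) blast

lemma seq_agree: "(\<forall>i<n. b i = b' i) \<Longrightarrow> seq b n = seq b' n"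
  by (induction n) auto

lemma sep: assumes "\<forall>i<m. b i = b' i" "b m \<noteq> b' m"
  shows "dist (f (P b (Suc m))) (f (P b' (Suc m))) > E b (Suc m) + E b' (Suc m)"
proof -
  have s: "seq b m = seq b' m" using seq_agree assms(1) by blast
  have G: "Good m (seq b m) (ch m (seq b m))" by (rule Good_seq)
  show ?thesis
  proof (cases "b m")
    case True
    hence "b' m = False" using assms(2) by simp
    thus ?thesis using G True s unfolding Good_def by simp
  next
    case False
    hence "b' m = True" using assms(2) by simp
    thus ?thesis using G False s unfolding Good_def by (simp add: dist_commute add.commute)
  qed
qed

lemma J_disj: assumes "y \<in> J (seq b n)" "y \<in> J (seq b' n)" shows "\<forall>i<n. b i = b' i"
proof -
  have kk: "k \<le> n \<Longrightarrow> \<forall>i<k. b i = b' i" for k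
  proof (induction k)
    case 0 then show ?case by simp
  next
    case (Suc k)
    hence IH: "\<forall>i<k. b i = b' i" by simp
    have "b k = b' k"
    proof (rule ccontr)
      assume ne: "b k \<noteq> b' k"
      have "y \<in> cball (f (P b (Suc k))) (E b (Suc k))" using J_mono[OF Suc.prems, of b] J_sub assms(1) by blast
      moreover have "y \<in> cball (f (P b' (Suc k))) (E b' (Suc k))" using J_mono[OF Suc.prems, of b'] J_sub assms(2) by blast
      ultimately have "dist (f (P b (Suc k))) (f (P b' (Suc k))) \<le> E b (Suc k) + E b' (Suc k)"
        using dist_triangle3[of "f (P b (Suc k))" "f (P b' (Suc k))" y] by (simp add: dist_commute)
      thus False using sep[OF IH ne] by simp
    qed
    thus ?case using IH less_Suc_eq by auto
  qed
  show ?thesis using kk[of n] by simp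
qed

lemma small: assumes "\<And>n. d \<le> 2 * (1/2::real)^n" "d \<ge> 0" shows "d = 0"
proof (rule ccontr)
  assume "d \<noteq> 0" hence "d/2 > 0" using assms(2) by simp
  then obtain n where "(1/2::real)^n < d/2" using real_arch_pow_inv[of "d/2" "1/2"] by auto
  thus False using assms(1)[of n] by simp
qed

lemma J_point: assumes "\<And>n. y \<in> J (seq b n)" shows "y = f (L b)"
proof -
  have "dist y (f (L b)) \<le> 2 * (1/2)^n" for n
  proof -
    have "y \<in> cball (f (P b n)) (E b n)" "f (L b) \<in> cball (f (P b n)) (E b n)" using assms g_J J_sub by blast+
    hence "dist y (f (L b)) \<le> 2 * E b n" using dist_triangle[of y "f (L b)" "f (P b n)"] by (simp add: dist_commute)
    thus ?thesis using Inv_seq[of n b] unfolding Inv_def by simp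
  qed
  thus ?thesis using small[of "dist y (f (L b))"] by simp
qed

definition U where "U n = (\<Union>b. J (seq b n))"

lemma U_closed: "closed (U n)"
proof -
  define T where "T = (\<lambda>S i. i \<in> (S::nat set)) ` Pow {..<n}"
  have fT: "finite T" unfolding T_def by simp
  have "seq b n = seq (\<lambda>i. i < n \<and> b i) n" for b by (rule seq_agree) simp
  moreover have "(\<lambda>i. i < n \<and> b i) \<in> T" for b unfolding T_def by (intro image_eqI[of _ _ "{i. i < n \<and> b i}"]) auto
  ultimately have "U n = (\<Union>h\<in>T. J (seq h n))" unfolding U_def by (auto, metis)
  thus ?thesis using fT unfolding J_def by (auto intro!: closed_UN)
qed

theorem main: "\<exists>K. closed K \<and> K \<subseteq> f ` F \<and> (\<exists>g::(nat\<Rightarrow>bool)\<Rightarrow>real. inj g \<and> range g \<subseteq> K)"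
proof (intro exI conjI)
  define K where "K = (\<Inter>n. U n)"
  show "closed K" unfolding K_def using U_closed by auto
  show "inj (\<lambda>b. f (L b))"
  proof
    fix b b' assume "f (L b) = f (L b')"
    hence "\<forall>i<n. b i = b' i" for n using J_disj[of "f (L b)" b n b'] g_J by metis
    thus "b = b'" by (intro ext) (metis lessI)
  qed
  show "range (\<lambda>b. f (L b)) \<subseteq> K" unfolding K_def U_def using g_J by blast
  show "K \<subseteq> f ` F"
  proof
    fix y assume "y \<in> K"
    hence "\<forall>n. \<exists>b. y \<in> J (seq b n)" unfolding K_def U_def by auto
    then obtain B where B: "\<And>n. y \<in> J (seq (B n) n)" by metis
    define c where "c i = B (Suc i) i" for i
    have "y \<in> J (seq c n)" for n
    proof -
      have "c i = B n i" if "i < n" for i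
      proof -
        have "y \<in> J (seq (B n) (Suc i))" using J_mono[of "Suc i" n "B n"] B that by auto
        thus ?thesis using J_disj[OF B[of "Suc i"]] unfolding c_def by auto
      qed
      hence "seq c n = seq (B n) n" by (intro seq_agree) auto
      thus ?thesis using B by simp
    qed
    hence "y = f (L c)" by (rule J_point)
    thus "y \<in> f ` F" using L_F by blast
  qed
qed

end



definition analytic :: "real set \<Rightarrow> bool" where
  "analytic S \<longleftrightarrow> (\<exists>F::(nat\<Rightarrow>real) set. \<exists>f. closed F \<and> continuous_on F f \<and> f ` F = S)"

lemma tendsto_cont: "continuous_on UNIV g \<Longrightarrow> X \<longlonglongrightarrow> l \<Longrightarrow> (\<lambda>n. g (X n)) \<longlonglongrightarrow> g l"
  by (rule continuous_on_tendsto_compose) auto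

lemma closed_vim: "continuous_on UNIV g \<Longrightarrow> closed B \<Longrightarrow> closed (g -` B)"
  using continuous_on_closed_vimage[of UNIV g] by auto

lemma analytic_closed: assumes "closed C" shows "analytic C"
proof -
  define F where "F = (\<lambda>x::nat\<Rightarrow>real. x 0) -` C \<inter> (\<Inter>n. (\<lambda>x::nat\<Rightarrow>real. x (Suc n)) -` {0})"
  have "closed F" unfolding F_def
    by (intro closed_Int closed_INT ballI closed_vim assms closed_singleton continuous_on_product_coordinates)
  moreover have "(\<lambda>x. x 0) ` F = C"
  proof
    show "(\<lambda>x. x 0) ` F \<subseteq> C" unfolding F_def by auto
    show "C \<subseteq> (\<lambda>x. x 0) ` F"
    proof
      fix c assume "c \<in> C"
      hence "(\<lambda>n. if n = 0 then c else 0) \<in> F" unfolding F_def by auto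
      thus "c \<in> (\<lambda>x. x 0) ` F" by (intro image_eqI) auto
    qed
  qed
  ultimately show ?thesis unfolding analytic_def
    by (intro exI[of _ F] exI[of _ "\<lambda>x. x 0"]) (auto intro: continuous_on_subset[OF continuous_on_product_coordinates])
qed


lemma nat_real_close: "dist (real j) (real m) < 1 \<Longrightarrow> j = m"
  by (simp add: dist_real_def)

lemma analytic_Union: fixes S :: "nat \<Rightarrow> real set" assumes "\<And>n. analytic (S n)" shows "analytic (\<Union>n. S n)"
proof -
  have "\<forall>n. \<exists>p. closed (fst p :: (nat\<Rightarrow>real) set) \<and> continuous_on (fst p) (snd p) \<and> snd p ` fst p = S n"
    using assms unfolding analytic_def by force
  then obtain PP where PP: "\<forall>n. closed (fst (PP n) :: (nat\<Rightarrow>real) set) \<and> continuous_on (fst (PP n)) (snd (PP n)) \<and> snd (PP n) ` fst (PP n) = S n"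
    using choice[OF \<open>\<forall>n. \<exists>p. _\<close>] by blast
  define Fs where "Fs n = fst (PP n)" for n
  define fs where "fs n = snd (PP n)" for n
  have Ff: "\<And>n. closed (Fs n)" "\<And>n. continuous_on (Fs n) (fs n)" "\<And>n. fs n ` Fs n = S n"
    using PP unfolding Fs_def fs_def by auto
  define sh where "sh x = (\<lambda>k. x (Suc k))" for x :: "nat \<Rightarrow> real"
  define F where "F = {x. \<exists>n. x 0 = real n \<and> sh x \<in> Fs n}"
  define f where "f x = fs (nat \<lfloor>x 0\<rfloor>) (sh x)" for x
  have csh: "continuous_on UNIV sh" unfolding sh_def
    by (intro continuous_on_coordinatewise_then_product continuous_on_product_coordinates)
  have Fm: "sh x \<in> Fs m" if "x \<in> F" "x 0 = real m" for x m
    using that unfolding F_def by auto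
  have key: "\<exists>m N. l 0 = real m \<and> (\<forall>k\<ge>N. xs k 0 = real m \<and> sh (xs k) \<in> Fs m)"
    if xs: "\<And>k. xs k \<in> F" "xs \<longlonglongrightarrow> l" for xs l
  proof -
    have t0: "(\<lambda>k. xs k 0) \<longlonglongrightarrow> l 0" using tendsto_cont[OF continuous_on_product_coordinates xs(2)] .
    obtain N where N: "\<And>k. k \<ge> N \<Longrightarrow> dist (xs k 0) (l 0) < 1/2"
      using metric_LIMSEQ_D[OF t0, of "1/2"] by auto
    obtain m where m: "xs N 0 = real m" using xs(1)[of N] unfolding F_def by auto
    have c: "xs k 0 = real m" if "k \<ge> N" for k
    proof -
      obtain j where j: "xs k 0 = real j" using xs(1)[of k] unfolding F_def by auto
      have "dist (xs k 0) (xs N 0) < 1"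
        using N[OF that] N[of N] dist_triangle_half_l[of "xs k 0" "l 0" 1 "xs N 0"] by (simp add: dist_commute)
      hence "j = m" using j m nat_real_close by simp
      thus ?thesis using j by simp
    qed
    have "(\<lambda>k. xs (k + N) 0) \<longlonglongrightarrow> l 0" using LIMSEQ_ignore_initial_segment[OF t0] .
    moreover have "(\<lambda>k. xs (k + N) 0) = (\<lambda>k. real m)" using c by auto
    ultimately have "l 0 = real m" using LIMSEQ_unique tendsto_const by metis
    thus ?thesis using c Fm xs(1) by blast
  qed
  have "closed F" unfolding closed_sequential_limits
  proof (intro allI impI)
    fix xs l assume a: "(\<forall>n. xs n \<in> F) \<and> xs \<longlonglongrightarrow> l"
    then obtain m N where mN: "l 0 = real m" "\<And>k. k \<ge> N \<Longrightarrow> xs k 0 = real m \<and> sh (xs k) \<in> Fs m"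
      using key by blast
    have lim: "(\<lambda>k. sh (xs (k + N))) \<longlonglongrightarrow> sh l"
      using tendsto_cont[OF csh LIMSEQ_ignore_initial_segment[of xs l N]] a by simp
    have "sh l \<in> Fs m"
      by (rule closed_sequentially[OF Ff(1)[of m] _ lim]) (use mN(2) in auto)
    thus "l \<in> F" unfolding F_def using mN(1) by blast
  qed
  moreover have "continuous_on F f"
  proof (rule continuous_on_sequentiallyI)
    fix u a assume u: "\<forall>n. u n \<in> F" "a \<in> F" "u \<longlonglongrightarrow> a"
    then obtain m N where mN: "a 0 = real m" "\<And>k. k \<ge> N \<Longrightarrow> u k 0 = real m \<and> sh (u k) \<in> Fs m"
      using key by blast
    have sa: "sh a \<in> Fs m" using Fm[OF u(2) mN(1)] .
    have "(\<lambda>k. sh (u (k + N))) \<longlonglongrightarrow> sh a"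
      using tendsto_cont[OF csh LIMSEQ_ignore_initial_segment[OF u(3), of N]] .
    hence "(fs m \<circ> (\<lambda>k. sh (u (k + N)))) \<longlonglongrightarrow> fs m (sh a)"
      using Ff(2)[of m] sa mN(2) unfolding continuous_on_sequentially by auto
    moreover have "(fs m \<circ> (\<lambda>k. sh (u (k + N)))) = (\<lambda>k. f (u (k + N)))"
      unfolding f_def using mN(2) by auto
    moreover have "f a = fs m (sh a)" unfolding f_def mN(1) by simp
    ultimately show "(\<lambda>n. f (u n)) \<longlonglongrightarrow> f a" using LIMSEQ_offset[of "\<lambda>n. f (u n)" N] by simp
  qed
  moreover have "f ` F = (\<Union>n. S n)"
  proof
    show "f ` F \<subseteq> (\<Union>n. S n)"
    proof
      fix y assume "y \<in> f ` F"
      then obtain x m where x: "y = f x" "x 0 = real m" "sh x \<in> Fs m" unfolding F_def by auto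
      have "y = fs m (sh x)" using x unfolding f_def by simp
      thus "y \<in> (\<Union>n. S n)" using x(3) Ff(3)[of m] by blast
    qed
    show "(\<Union>n. S n) \<subseteq> f ` F"
    proof
      fix y assume "y \<in> (\<Union>n. S n)"
      then obtain m z where z: "z \<in> Fs m" "y = fs m z" using Ff(3) by blast
      define x where "x = (\<lambda>k. case k of 0 \<Rightarrow> real m | Suc j \<Rightarrow> z j)"
      have "sh x = z" unfolding x_def sh_def by simp
      hence "x \<in> F" "f x = y" unfolding F_def f_def using z by (auto simp: x_def)
      thus "y \<in> f ` F" by blast
    qed
  qed
  ultimately show ?thesis unfolding analytic_def by blast
qed


lemma analytic_Inter: fixes S :: "nat \<Rightarrow> real set" assumes "\<And>n. analytic (S n)" shows "analytic (\<Inter>n. S n)"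
proof -
  have "\<forall>n. \<exists>p. closed (fst p :: (nat\<Rightarrow>real) set) \<and> continuous_on (fst p) (snd p) \<and> snd p ` fst p = S n"
    using assms unfolding analytic_def by force
  then obtain PP where PP: "\<forall>n. closed (fst (PP n) :: (nat\<Rightarrow>real) set) \<and> continuous_on (fst (PP n)) (snd (PP n)) \<and> snd (PP n) ` fst (PP n) = S n"
    using choice[OF \<open>\<forall>n. \<exists>p. _\<close>] by blast
  define Fs where "Fs n = fst (PP n)" for n
  define fs where "fs n = snd (PP n)" for n
  have Ff: "\<And>n. closed (Fs n)" "\<And>n. continuous_on (Fs n) (fs n)" "\<And>n. fs n ` Fs n = S n"
    using PP unfolding Fs_def fs_def by auto
  define up where "up x n = (\<lambda>k. x (prod_encode (n, k)))" for x :: "nat \<Rightarrow> real" and n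
  have cup: "continuous_on UNIV (\<lambda>x. up x n)" for n unfolding up_def
    by (intro continuous_on_coordinatewise_then_product continuous_on_product_coordinates)
  define G where "G n = (\<lambda>x. up x n) -` Fs n" for n
  have cG: "closed (G n)" for n unfolding G_def by (rule closed_vim[OF cup Ff(1)])
  have cfs: "continuous_on (G n) (\<lambda>x. fs n (up x n))" for n
    by (rule continuous_on_compose2[OF Ff(2) continuous_on_subset[OF cup]]) (auto simp: G_def)
  define F where "F = (\<Inter>n. (G n \<inter> G 0) \<inter> (\<lambda>x. fs n (up x n) - fs 0 (up x 0)) -` {0})"
  have "closed F" unfolding F_def
  proof (intro closed_INT ballI continuous_closed_preimage)
    fix n
    show "continuous_on (G n \<inter> G 0) (\<lambda>x. fs n (up x n) - fs 0 (up x 0))"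
      by (intro continuous_on_diff continuous_on_subset[OF cfs]) auto
    show "closed (G n \<inter> G 0)" using cG by auto
  qed auto
  moreover have "continuous_on F (\<lambda>x. fs 0 (up x 0))"
    by (rule continuous_on_subset[OF cfs]) (auto simp: F_def)
  moreover have "(\<lambda>x. fs 0 (up x 0)) ` F = (\<Inter>n. S n)"
  proof
    show "(\<lambda>x. fs 0 (up x 0)) ` F \<subseteq> (\<Inter>n. S n)"
    proof
      fix y assume "y \<in> (\<lambda>x. fs 0 (up x 0)) ` F"
      then obtain x where x: "x \<in> F" "y = fs 0 (up x 0)" by blast
      have "y \<in> S n" for n
      proof -
        have "up x n \<in> Fs n" "fs n (up x n) = y" using x unfolding F_def G_def by auto
        thus ?thesis using Ff(3)[of n] by blast
      qed
      thus "y \<in> (\<Inter>n. S n)" by blast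
    qed
    show "(\<Inter>n. S n) \<subseteq> (\<lambda>x. fs 0 (up x 0)) ` F"
    proof
      fix y assume "y \<in> (\<Inter>n. S n)"
      hence "y \<in> fs n ` Fs n" for n using Ff(3) by simp
      hence ex: "\<forall>n. \<exists>z. z \<in> Fs n \<and> fs n z = y" by (metis imageE)
      obtain Z where Z: "\<forall>n. Z n \<in> Fs n \<and> fs n (Z n) = y" using choice[OF ex] by blast
      define x where "x m = Z (fst (prod_decode m)) (snd (prod_decode m))" for m
      have "up x n = Z n" for n unfolding up_def x_def by simp
      hence "x \<in> F" "fs 0 (up x 0) = y" using Z unfolding F_def G_def by auto
      thus "y \<in> (\<lambda>x. fs 0 (up x 0)) ` F" by blast
    qed
  qed
  ultimately show ?thesis unfolding analytic_def by blast
qed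


lemma open_analytic: fixes U :: "real set" assumes "open U" shows "analytic U"
proof (cases "U = UNIV")
  case True thus ?thesis using analytic_closed[of UNIV] by simp
next
  case False
  define C where "C = -U"
  have C: "closed C" "C \<noteq> {}" using closed_Compl[OF assms] False unfolding C_def by auto
  have "U = (\<Union>n. {x. 1 / real (Suc n) \<le> infdist x C})"
  proof
    show "U \<subseteq> (\<Union>n. {x. 1 / real (Suc n) \<le> infdist x C})"
    proof
      fix x assume "x \<in> U"
      hence "x \<notin> C" unfolding C_def by simp
      hence "infdist x C > 0" using infdist_pos_not_in_closed[OF C] by blast
      then obtain n where "inverse (real (Suc n)) < infdist x C" using reals_Archimedean[of "infdist x C"] by blast
      hence "1 / real (Suc n) \<le> infdist x C" by (simp add: inverse_eq_divide)
      thus "x \<in> (\<Union>n. {x. 1 / real (Suc n) \<le> infdist x C})" by blast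
    qed
    show "(\<Union>n. {x. 1 / real (Suc n) \<le> infdist x C}) \<subseteq> U"
    proof
      fix x assume "x \<in> (\<Union>n. {x. 1 / real (Suc n) \<le> infdist x C})"
      then obtain n where n: "1 / real (Suc n) \<le> infdist x C" by auto
      have "0 < 1 / real (Suc n)" by simp
      hence "infdist x C \<noteq> 0" using n by linarith
      hence "x \<notin> C" using infdist_zero by blast
      thus "x \<in> U" unfolding C_def by simp
    qed
  qed
  moreover have "closed {x::real. 1 / real (Suc n) \<le> infdist x C}" for n
    by (intro closed_Collect_le continuous_intros)
  hence "analytic (\<Union>n. {x. 1 / real (Suc n) \<le> infdist x C})"
    by (intro analytic_Union analytic_closed)
  ultimately show ?thesis by simp
qed

lemma sets_borel_closed: "sets borel = sigma_sets UNIV (Collect closed)"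
  unfolding borel_eq_closed by (rule sets_measure_of) simp

lemma borel_analytic: assumes "(S::real set) \<in> sets borel" shows "analytic S \<and> analytic (-S)"
proof -
  have "S \<in> sigma_sets UNIV (Collect closed)" using assms by (simp only: sets_borel_closed)
  thus ?thesis
  proof (induction rule: sigma_sets.induct)
    case (Basic a)
    hence "closed a" by simp
    thus ?case using analytic_closed open_analytic[OF open_Compl] by blast
  next
    case Empty
    thus ?case using analytic_closed[of "{}"] analytic_closed[of UNIV] by simp
  next
    case (Compl a)
    have "UNIV - a = -a" by blast
    thus ?case using Compl.IH by simp
  next
    case (Union A)
    have a1: "analytic (A n)" "analytic (- A n)" for n using Union.IH[of n] by auto
    have "analytic (\<Union>n. A n)" by (rule analytic_Union[OF a1(1)])
    moreover have "analytic (\<Inter>n. - A n)" by (rule analytic_Inter[OF a1(2)])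
    moreover have "- (\<Union>n. A n) = (\<Inter>n. - A n)" by blast
    ultimately show ?case by simp
  qed
qed


lemma closed_count: "|{K::real set. closed K}| \<le>o |UNIV::(nat\<Rightarrow>bool) set|"
proof -
  define \<phi> where "\<phi> K = (\<lambda>n. case (from_nat n :: rat \<times> rat) of (q, r) \<Rightarrow> {real_of_rat q<..<real_of_rat r} \<inter> K = {})"
    for K :: "real set"
  have sub: "x \<notin> K2" if c1: "closed K1" and c2: "\<phi> K1 = \<phi> K2" and c3: "x \<notin> K1" for K1 K2 x
  proof -
    have "open (-K1)" using c1 by (simp add: open_Compl)
    then obtain e where e: "e > 0" "ball x e \<subseteq> -K1" using c3 open_contains_ball by blast
    obtain q where q: "q \<in> \<rat>" "x - e < q" "q < x" using Rats_dense_in_real[of "x - e" x] e(1) by auto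
    obtain r where r: "r \<in> \<rat>" "x < r" "r < x + e" using Rats_dense_in_real[of x "x + e"] e(1) by auto
    obtain q' where q': "q = real_of_rat q'" using q(1) Rats_cases by blast
    obtain r' where r': "r = real_of_rat r'" using r(1) Rats_cases by blast
    have I: "{q<..<r} \<subseteq> ball x e"
    proof
      fix y assume "y \<in> {q<..<r}"
      thus "y \<in> ball x e" using q r by (auto simp: dist_real_def)
    qed
    have "\<phi> K1 (to_nat (q', r'))" unfolding \<phi>_def using I e(2) q' r' by auto
    hence "\<phi> K2 (to_nat (q', r'))" using c2 by simp
    hence "{q<..<r} \<inter> K2 = {}" unfolding \<phi>_def q' r' by simp
    moreover have "x \<in> {q<..<r}" using q r by simp
    ultimately show ?thesis by blast
  qed
  have "inj_on \<phi> {K. closed K}"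
  proof (rule inj_onI)
    fix K1 K2 assume "K1 \<in> {K. closed K}" "K2 \<in> {K. closed K}" "\<phi> K1 = \<phi> K2"
    hence c: "closed K1" "closed K2" "\<phi> K1 = \<phi> K2" by auto
    have "-K1 \<subseteq> -K2" using sub[OF c(1) c(3)] by blast
    moreover have "-K2 \<subseteq> -K1" using sub[OF c(2) c(3)[symmetric]] by blast
    ultimately show "K1 = K2" by blast
  qed
  hence "\<exists>g. inj_on g {K::real set. closed K} \<and> g ` {K. closed K} \<subseteq> (UNIV::(nat\<Rightarrow>bool) set)" by blast
  thus ?thesis by (rule card_of_ordLeq[THEN iffD1])
qed

lemma infinite_cantor: "infinite (UNIV::(nat\<Rightarrow>bool) set)"
proof
  assume "finite (UNIV::(nat\<Rightarrow>bool) set)"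
  moreover have "inj (\<lambda>n::nat. \<lambda>i. i = n)" by (auto simp: inj_on_def fun_eq_iff)
  hence "infinite (range (\<lambda>n::nat. \<lambda>i. i = n))" by (rule range_inj_infinite)
  ultimately show False by (meson finite_subset subset_UNIV)
qed

lemma bernstein_exists: "\<exists>S. bernstein_set S"
proof -
  define T where "T = (UNIV::(nat\<Rightarrow>bool) set)"
  define KK where "KK = {K::real set. closed K \<and> |T| \<le>o |K|}"
  have "|KK| \<le>o |{K::real set. closed K}|" unfolding KK_def by (rule card_of_mono1) blast
  hence "|KK| \<le>o |T|" using closed_count unfolding T_def by (rule ordLeq_transitive)
  moreover have "\<And>K. K \<in> KK \<Longrightarrow> |T| \<le>o |K|" unfolding KK_def by blast
  moreover have "infinite T" unfolding T_def by (rule infinite_cantor)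
  ultimately obtain S where S: "\<forall>K\<in>KK. K \<inter> S \<noteq> {} \<and> K - S \<noteq> {}"
    using bernstein_generic[of KK T] by blast
  have "bernstein_set S" unfolding bernstein_set_def
  proof (intro ballI impI)
    fix Z :: "real set" assume Z: "Z \<in> sets borel" "uncountable Z"
    obtain F :: "(nat\<Rightarrow>real) set" and f where F: "closed F" "continuous_on F f" "f ` F = Z"
      using borel_analytic[OF Z(1)] unfolding analytic_def by blast
    interpret pst F f using F Z(2) by unfold_locales auto
    obtain K g where K: "closed K" "K \<subseteq> f ` F" "inj (g :: (nat\<Rightarrow>bool) \<Rightarrow> real)" "range g \<subseteq> K"
      using main by blast
    have "\<exists>g. inj_on g (UNIV::(nat\<Rightarrow>bool) set) \<and> g ` UNIV \<subseteq> K" using K(3,4) by blast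
    hence "|T| \<le>o |K|" unfolding T_def by (rule card_of_ordLeq[THEN iffD1])
    hence "K \<in> KK" using K(1) unfolding KK_def by blast
    hence "K \<inter> S \<noteq> {} \<and> K - S \<noteq> {}" using S by simp
    thus "Z \<inter> S \<noteq> {} \<and> Z - S \<noteq> {}" using K(2) F(3) by blast
  qed
  thus ?thesis by blast
qed

lemma bernstein_compl: assumes "bernstein_set A" shows "bernstein_set (-A)"
  unfolding bernstein_set_def
proof (intro ballI impI)
  fix Z :: "real set" assume Z: "Z \<in> sets borel" "uncountable Z"
  have h: "Z \<inter> A \<noteq> {} \<and> Z - A \<noteq> {}" using assms[unfolded bernstein_set_def, rule_format, OF Z] .
  have "Z \<inter> -A = Z - A" "Z - -A = Z \<inter> A" by auto
  thus "Z \<inter> - A \<noteq> {} \<and> Z - - A \<noteq> {}" using h by simp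
qed

lemma frac_shift: assumes "0 \<le> w" "w < 1" shows "frac (w + real_of_int k) = w" "\<lfloor>w + real_of_int k\<rfloor> = k"
proof -
  have "\<lfloor>w\<rfloor> = 0" using assms by (simp add: floor_eq_iff)
  thus "\<lfloor>w + real_of_int k\<rfloor> = k" by simp
  thus "frac (w + real_of_int k) = w" unfolding frac_def by simp
qed

lemma borel_Ico: "{a..<b::real} \<in> sets borel"
  by simp

lemma bernstein_periodic:
  assumes S: "bernstein_set S"
  defines "A \<equiv> {x::real. (frac x \<in> S) = even \<lfloor>x\<rfloor>}"
  shows "bernstein_set A"
  unfolding bernstein_set_def
proof (intro ballI impI)
  fix Z :: "real set" assume Z: "Z \<in> sets borel" "uncountable Z"
  have "\<exists>k::int. uncountable (Z \<inter> {real_of_int k..<real_of_int k + 1})"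
  proof (rule ccontr)
    assume "\<not> ?thesis"
    hence c: "countable (Z \<inter> {real_of_int k..<real_of_int k + 1})" for k by simp
    have eq: "Z = (\<Union>k. Z \<inter> {real_of_int k..<real_of_int k + 1})"
    proof
      show "Z \<subseteq> (\<Union>k. Z \<inter> {real_of_int k..<real_of_int k + 1})"
      proof
        fix x assume "x \<in> Z"
        moreover have "x \<in> {real_of_int \<lfloor>x\<rfloor>..<real_of_int \<lfloor>x\<rfloor> + 1}" by simp
        ultimately show "x \<in> (\<Union>k. Z \<inter> {real_of_int k..<real_of_int k + 1})" by blast
      qed
      show "(\<Union>k. Z \<inter> {real_of_int k..<real_of_int k + 1}) \<subseteq> Z" by blast
    qed
    have cU: "countable (\<Union>k. Z \<inter> {real_of_int k..<real_of_int k + 1})"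
      by (intro countable_UN c) auto
    have "countable Z" by (subst eq) (rule cU)
    thus False using Z(2) by simp
  qed
  then obtain k :: int where k: "uncountable (Z \<inter> {real_of_int k..<real_of_int k + 1})" by blast
  define W where "W = (\<lambda>w. w + real_of_int k) -` (Z \<inter> {real_of_int k..<real_of_int k + 1})"
  have "(\<lambda>w. w + real_of_int k) \<in> borel_measurable borel"
    by (intro borel_measurable_continuous_onI continuous_intros)
  moreover have "Z \<inter> {real_of_int k..<real_of_int k + 1} \<in> sets borel" using Z(1) borel_Ico by blast
  ultimately have "W \<inter> space borel \<in> sets borel" unfolding W_def by (rule measurable_sets)
  hence WB: "W \<in> sets borel" by simp
  have "surj (\<lambda>w. w + real_of_int k)" by (rule surjI[of _ "\<lambda>w. w - real_of_int k"]) simp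
  hence "(\<lambda>w. w + real_of_int k) ` W = Z \<inter> {real_of_int k..<real_of_int k + 1}"
    unfolding W_def image_vimage_eq by simp
  hence WU: "uncountable W" using k countable_image[of W "\<lambda>w. w + real_of_int k"] by auto
  have Wp: "0 \<le> w" "w < 1" "w + real_of_int k \<in> Z" if "w \<in> W" for w using that unfolding W_def by auto
  have WS: "W \<inter> S \<noteq> {} \<and> W - S \<noteq> {}" using S[unfolded bernstein_set_def, rule_format, OF WB WU] .
  obtain w1 where w1: "w1 \<in> W" "w1 \<in> S" using WS by blast
  obtain w2 where w2: "w2 \<in> W" "w2 \<notin> S" using WS by blast
  have memA: "w + real_of_int k \<in> A \<longleftrightarrow> ((w \<in> S) = even k)" if "w \<in> W" for w
    unfolding A_def using frac_shift[OF Wp(1,2)[OF that], of k] by simp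
  have z1: "w1 + real_of_int k \<in> Z" "w2 + real_of_int k \<in> Z" using Wp(3) w1(1) w2(1) by auto
  show "Z \<inter> A \<noteq> {} \<and> Z - A \<noteq> {}"
  proof (cases "even k")
    case True
    hence "w1 + real_of_int k \<in> A" "w2 + real_of_int k \<notin> A" using memA[OF w1(1)] memA[OF w2(1)] w1(2) w2(2) by auto
    thus ?thesis using z1 by blast
  next
    case False
    hence "w2 + real_of_int k \<in> A" "w1 + real_of_int k \<notin> A" using memA[OF w1(1)] memA[OF w2(1)] w1(2) w2(2) by auto
    thus ?thesis using z1 by blast
  qed
qed

lemma periodic_flip: "x + 1 \<in> {x::real. (frac x \<in> S) = even \<lfloor>x\<rfloor>} \<longleftrightarrow> x \<notin> {x::real. (frac x \<in> S) = even \<lfloor>x\<rfloor>}"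
  by (simp add: frac_1_eq)

lemma not_cov: assumes "\<And>x. x + 1 \<in> A \<longleftrightarrow> x \<notin> A" shows "\<not> n_covering 2 A"
  unfolding n_covering_def
proof
  assume "\<forall>B::real set. finite B \<and> card B = 2 \<longrightarrow> (\<exists>x. (\<lambda>b. b + x) ` B \<subseteq> A)"
  moreover have "finite {0, 1::real} \<and> card {0, 1::real} = 2" by simp
  ultimately have "\<exists>x. (\<lambda>b. b + x) ` {0, 1::real} \<subseteq> A" by blast
  then obtain x where "x \<in> A" "1 + x \<in> A" by auto
  thus False using assms[of x] by (simp add: add.commute)
qed

theorem mainTheorem5:
  shows "\<exists>A B :: real set. A \<inter> B = {} \<and> A \<union> B = UNIV \<and>
           bernstein_set A \<and> bernstein_set B \<and>
           \<not> n_covering 2 A \<and> \<not> n_covering 2 B"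
proof -
  obtain S where S: "bernstein_set S" using bernstein_exists by blast
  define A where "A = {x::real. (frac x \<in> S) = even \<lfloor>x\<rfloor>}"
  have bA: "bernstein_set A" unfolding A_def by (rule bernstein_periodic[OF S])
  have fl: "x + 1 \<in> A \<longleftrightarrow> x \<notin> A" for x unfolding A_def by (rule periodic_flip)
  have fl2: "x + 1 \<in> -A \<longleftrightarrow> x \<notin> -A" for x using fl[of x] by simp
  have d: "A \<inter> -A = {}" "A \<union> -A = UNIV" by auto
  have bB: "bernstein_set (-A)" by (rule bernstein_compl[OF bA])
  have nA: "\<not> n_covering 2 A" by (rule not_cov) (rule fl)
  have nB: "\<not> n_covering 2 (-A)" by (rule not_cov) (rule fl2)
  show ?thesis
    apply (rule exI[of _ A], rule exI[of _ "-A"])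
    using d bA bB nA nB by simp
qed

end
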